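(* Fix $m\ge 1$, a partition $\xi$ with all parts $\le m$, and $\mu\in\mathbb Z_{\ge0}$ with $\mu=\mu_1m+\mu_0$, $0\le\mu_0<m$. Let $t=\#\{i:\xi_i=m\}$ and assume $k:=\mu_1+1-t\ge 0$. Let $\alpha_0:=m-\mu_0-1$ and let $\alpha_1,\dots,\alpha_L$ be the parts of $\xi$ strictly smaller than $m$, listed with multiplicity, so that \[ F_{\xi,m,\mu}(x)=\frac{p_{m-\mu_0-1}(x)p_\xi(x)}{p_m(x)^{\mu_1+1}}=\frac{\prod_{i=0}^L p_{\alpha_i}(x)}{p_m(x)^k}=\sum_{r\ge0}a_rx^r. \] Then for every $r\ge 0$, \[ a_r=\sum_{\substack{j_0,\dots,j_L\ge 0,\ u_1,\dots,u_k\ge 0\\ j_0+\cdots+j_L+u_1+\cdots+u_k=r}}(-1)^{j_0+\cdots+j_L}\left(\prod_{i=0}^L\binom{\alpha_i-j_i}{j_i}\right)\left(\prod_{\nu=1}^kB_m(u_\nu)\right), \] where the second product is $1$ if $k=0$. Equivalently, $a_r$ is the signed count of tuples $(M_0,\dots,M_L,\gamma_1,\dots,\gamma_k)$ such that each $M_i$ is a matching in the path graph $P_{\alpha_i}$, each $\gamma_\nu$ is a full-height strip walk of height $m-1$, $|M_0|+\cdots+|M_L|+e(\gamma_1)+\cdots+e(\gamma_k)=r$, and each tuple is counted with sign $(-1)^{|M_0|+\cdots+|M_L|}$.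
   Context: $p_0=p_1=1$, $p_{r+1}(x)=p_r(x)-xp_{r-1}(x)$ ($r\ge1$); $p_\xi=\prod_i p_{\xi_i}$. Convention: $\binom{A}{B}=0$ unless $0\le B\le A$. For $r\ge0$, $P_r$ is the path graph on vertices $1,\dots,r$ with edges $\{i,i+1\}$, $1\le i<r$ ($P_0$ empty); a matching is a set of pairwise disjoint edges, $|M|$ its number of edges. For $m\ge1$ and $0\le a,b\le m-1$, a strip walk of height $m-1$ from $a$ to $b$ of length $L$ is a sequence $(h_0,\dots,h_L)$ of integers with $h_0=a$, $h_L=b$, $h_{i+1}-h_i\in\{\pm1\}$, and $0\le h_i\le m-1$ for all $i$; $w^{(m)}_L(a,b)$ denotes the number of them. A full-height strip walk is one from $0$ to $m-1$; its excess is $e(\gamma)=(L-(m-1))/2$. $B_m(u):=w^{(m)}_{m-1+2u}(0,m-1)$, the number of full-height strip walks of excess $u$. *)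

theory Defs
  imports "HOL-Computational_Algebra.Computational_Algebra"
begin

fun pp :: "nat \<Rightarrow> 'a::comm_ring_1 poly" where
  "pp 0 = 1"
| "pp (Suc 0) = 1"
| "pp (Suc (Suc r)) = pp (Suc r) - [:0, 1:] * pp r"

text \<open>Strip walks of height m-1: nonempty integer sequences (h_0,...,h_L) with steps +-1
  staying in [0, m-1].  The length of the walk is (length of the list) - 1.\<close>
definition strip_walk :: "nat \<Rightarrow> int list \<Rightarrow> bool" where
  "strip_walk m hs \<longleftrightarrow> hs \<noteq> [] \<and>
     (\<forall>i. Suc i < length hs \<longrightarrow> \<bar>hs ! Suc i - hs ! i\<bar> = 1) \<and>
     (\<forall>h \<in> set hs. 0 \<le> h \<and> h \<le> int m - 1)"

definition walk_count :: "nat \<Rightarrow> nat \<Rightarrow> int \<Rightarrow> int \<Rightarrow> nat" where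
  "walk_count m L a b = card {hs. strip_walk m hs \<and> length hs = Suc L \<and>
                                 hs ! 0 = a \<and> hs ! L = b}"

definition full_height_walk :: "nat \<Rightarrow> int list \<Rightarrow> bool" where
  "full_height_walk m hs \<longleftrightarrow> strip_walk m hs \<and> hd hs = 0 \<and> last hs = int m - 1"

definition excess :: "nat \<Rightarrow> int list \<Rightarrow> nat" where
  "excess m hs = (length hs - 1 - (m - 1)) div 2"

definition Bm :: "nat \<Rightarrow> nat \<Rightarrow> nat" where
  "Bm m u = walk_count m (m - 1 + 2 * u) 0 (int m - 1)"

definition path_matching :: "nat \<Rightarrow> nat set set \<Rightarrow> bool" where
  "path_matching n M \<longleftrightarrow> M \<subseteq> {{i, i + 1} | i. 1 \<le> i \<and> i < n} \<and>
     (\<forall>e \<in> M. \<forall>e' \<in> M. e \<noteq> e' \<longrightarrow> e \<inter> e' = {})"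

end

theory Submission
  imports Defs
begin

lemma coeff_pp: "coeff (pp n :: 'a::comm_ring_1 poly) j = (-1)^j * of_nat ((n - j) choose j)"
proof (induction n arbitrary: j rule: pp.induct)
  case 1 then show ?case by (cases j) auto
next
  case 2 then show ?case by (cases j) auto
next
  case (3 r)
  show ?case
  proof (cases j)
    case 0 then show ?thesis using 3 by (simp add: coeff_pCons)
  next
    case (Suc i)
    have c: "coeff ([:0, 1:] * pp r) (Suc i) = (coeff (pp r) i :: 'a)"
      by (simp add: coeff_pCons)
    have "coeff (pp (Suc (Suc r)) :: 'a poly) j = coeff (pp (Suc r)) (Suc i) - coeff (pp r) i"
      using Suc c by simp
    also have "\<dots> = (-1)^Suc i * of_nat ((Suc r - Suc i) choose Suc i) - (-1)^i * of_nat ((r - i) choose i)"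
      using 3 by simp
    also have "\<dots> = (-1)^Suc i * of_nat (((r - i) choose Suc i) + ((r - i) choose i))"
      by (simp add: algebra_simps)
    also have "\<dots> = (-1)^j * of_nat ((Suc (Suc r) - j) choose j)"
    proof (cases "i \<le> r")
      case True
      then have "Suc (Suc r) - j = Suc (r - i)" using Suc by simp
      then show ?thesis using Suc by (simp add: add.commute)
    next
      case False
      then show ?thesis using Suc by (cases i) auto
    qed
    finally show ?thesis .
  qed
qed

lemma pp_rec: "pp (Suc (Suc r)) = pp (Suc r) - [:0, 1:] * pp r" by simp

lemma coeff_pp0 [simp]: "coeff (pp n :: 'a::comm_ring_1 poly) 0 = 1"
  by (simp add: coeff_pp)

lemma prod_list_split:
  assumes "\<forall>x\<in>set xs. x \<le> (m::nat)"
  shows "prod_list (map f xs) = (f m :: 'a::comm_monoid_mult) ^ count_list xs m * prod_list (map f (filter (\<lambda>x. x < m) xs))"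
  using assms by (induction xs) (auto simp: algebra_simps)

definition WS :: "nat \<Rightarrow> nat \<Rightarrow> int \<Rightarrow> int list set" where
  "WS m N c = {hs. strip_walk m hs \<and> length hs = Suc N \<and> hs ! 0 = 0 \<and> hs ! N = c}"

lemma wc_WS: "walk_count m N 0 c = card (WS m N c)"
  by (simp add: walk_count_def WS_def)

lemma finite_WS: "finite (WS m N c)"
proof -
  have "WS m N c \<subseteq> {hs. set hs \<subseteq> {0..int m - 1} \<and> length hs = Suc N}"
    by (auto simp: WS_def strip_walk_def)
  moreover have "finite {hs. set hs \<subseteq> {0..int m - 1} \<and> length hs = Suc N}"
    by (rule finite_lists_length_eq) simp
  ultimately show ?thesis by (rule finite_subset)
qed

lemma WS_out: "c < 0 \<or> c > int m - 1 \<Longrightarrow> WS m N c = {}"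
proof (rule ccontr)
  assume c: "c < 0 \<or> c > int m - 1" and "WS m N c \<noteq> {}"
  then obtain hs where hs: "hs \<in> WS m N c" by blast
  then have "hs ! N \<in> set hs" by (auto simp: WS_def)
  then show False using hs c by (auto simp: WS_def strip_walk_def)
qed

lemma wc_out: "c < 0 \<or> c > int m - 1 \<Longrightarrow> walk_count m N 0 c = 0"
  using WS_out by (simp add: wc_WS)

lemma WS_0: "m \<ge> 1 \<Longrightarrow> WS m 0 c = (if c = 0 then {[0]} else {})"
  by (auto simp: WS_def strip_walk_def length_Suc_conv)

lemma wc_0: "m \<ge> 1 \<Longrightarrow> walk_count m 0 0 c = (if c = 0 then 1 else 0)"
  by (simp add: wc_WS WS_0)

lemma WS_Suc:
  assumes c: "0 \<le> c" "c \<le> int m - 1"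
  shows "WS m (Suc N) c = (\<lambda>hs. hs @ [c]) ` (WS m N (c - 1) \<union> WS m N (c + 1))"
proof
  show "WS m (Suc N) c \<subseteq> (\<lambda>hs. hs @ [c]) ` (WS m N (c - 1) \<union> WS m N (c + 1))"
  proof
    fix hs assume hs: "hs \<in> WS m (Suc N) c"
    define hs' where "hs' = butlast hs"
    have len: "length hs = Suc (Suc N)" using hs by (simp add: WS_def)
    have ne: "hs \<noteq> []" using len by auto
    have lst: "last hs = c" using hs len ne by (simp add: WS_def last_conv_nth)
    have eq: "hs = hs' @ [c]" using ne lst by (metis append_butlast_last_id hs'_def)
    have len': "length hs' = Suc N" using len by (simp add: hs'_def)
    have nth': "\<And>i. i < Suc N \<Longrightarrow> hs' ! i = hs ! i"
      using len' eq by (metis nth_append_left)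
    have sw: "strip_walk m hs" using hs by (simp add: WS_def)
    have step: "\<bar>hs ! Suc N - hs ! N\<bar> = 1" using sw len by (simp add: strip_walk_def)
    have hsN: "hs ! Suc N = c" using hs by (simp add: WS_def)
    have sw': "strip_walk m hs'"
      unfolding strip_walk_def
    proof (intro conjI allI impI ballI)
      show "hs' \<noteq> []" using len' by auto
    next
      fix i assume "Suc i < length hs'"
      then show "\<bar>hs' ! Suc i - hs' ! i\<bar> = 1" using sw len len' nth'
        by (simp add: strip_walk_def)
    next
      fix h assume "h \<in> set hs'"
      then have "h \<in> set hs" using eq by auto
      then show "0 \<le> h" "h \<le> int m - 1" using sw by (auto simp: strip_walk_def)
    qed
    have z: "hs' ! 0 = 0" using hs nth'[of 0] by (simp add: WS_def)
    have "hs' ! N = c - 1 \<or> hs' ! N = c + 1" using step hsN nth'[of N] by auto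
    then have "hs' \<in> WS m N (c - 1) \<union> WS m N (c + 1)"
      using sw' len' z by (auto simp: WS_def)
    then show "hs \<in> (\<lambda>hs. hs @ [c]) ` (WS m N (c - 1) \<union> WS m N (c + 1))"
      using eq by blast
  qed
next
  show "(\<lambda>hs. hs @ [c]) ` (WS m N (c - 1) \<union> WS m N (c + 1)) \<subseteq> WS m (Suc N) c"
  proof
    fix x assume "x \<in> (\<lambda>hs. hs @ [c]) ` (WS m N (c - 1) \<union> WS m N (c + 1))"
    then obtain hs where x: "x = hs @ [c]" and hs: "hs \<in> WS m N (c - 1) \<union> WS m N (c + 1)"
      by blast
    have len: "length hs = Suc N" and sw: "strip_walk m hs" and z: "hs ! 0 = 0"
      and last: "hs ! N = c - 1 \<or> hs ! N = c + 1"
      using hs by (auto simp: WS_def)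
    have "strip_walk m x"
      unfolding strip_walk_def
    proof (intro conjI allI impI ballI)
      show "x \<noteq> []" using x by simp
    next
      fix i assume i: "Suc i < length x"
      show "\<bar>x ! Suc i - x ! i\<bar> = 1"
      proof (cases "Suc i < length hs")
        case True
        then show ?thesis using sw x by (simp add: strip_walk_def nth_append)
      next
        case False
        then have "i = N" using i x len by simp
        then show ?thesis using x len last by (auto simp: nth_append)
      qed
    next
      fix h assume "h \<in> set x"
      then have "h \<in> set hs \<or> h = c" using x by auto
      then show "0 \<le> h" "h \<le> int m - 1" using sw c by (auto simp: strip_walk_def)
    qed
    then show "x \<in> WS m (Suc N) c" using x len z by (simp add: WS_def nth_append)
  qed
qed

lemma wc_Suc:
  assumes c: "0 \<le> c" "c \<le> int m - 1"
  shows "walk_count m (Suc N) 0 c = walk_count m N 0 (c - 1) + walk_count m N 0 (c + 1)"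
proof -
  have d: "WS m N (c - 1) \<inter> WS m N (c + 1) = {}" by (auto simp: WS_def)
  have "card (WS m (Suc N) c) = card (WS m N (c - 1) \<union> WS m N (c + 1))"
    unfolding WS_Suc[OF c] by (rule card_image) (auto simp: inj_on_def)
  also have "\<dots> = card (WS m N (c - 1)) + card (WS m N (c + 1))"
    by (rule card_Un_disjoint) (auto simp: finite_WS d)
  finally show ?thesis by (simp add: wc_WS)
qed

lemma wc_far: "m \<ge> 1 \<Longrightarrow> int N < c \<Longrightarrow> walk_count m N 0 c = 0"
proof (induction N arbitrary: c)
  case 0 then show ?case by (simp add: wc_0)
next
  case (Suc N)
  show ?case
  proof (cases "c \<le> int m - 1")
    case True
    then show ?thesis using Suc by (simp add: wc_Suc)
  next
    case False then show ?thesis by (simp add: wc_out)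
  qed
qed

definition vv :: "nat \<Rightarrow> nat \<Rightarrow> nat \<Rightarrow> nat" where
  "vv m b n = walk_count m (b + 2 * n) 0 (int b)"

lemma vv_00: "m \<ge> 1 \<Longrightarrow> vv m 0 0 = 1" by (simp add: vv_def wc_0)

lemma vv_0Suc: "m \<ge> 1 \<Longrightarrow> vv m 0 (Suc n) = vv m 1 n"
proof -
  assume m: "m \<ge> 1"
  have "walk_count m (Suc (Suc (2 * n))) 0 0 = walk_count m (Suc (2*n)) 0 (-1) + walk_count m (Suc (2*n)) 0 1"
    using m by (simp add: wc_Suc)
  then show ?thesis by (simp add: vv_def wc_out)
qed

lemma vv_b0: "m \<ge> 1 \<Longrightarrow> Suc b < m \<Longrightarrow> vv m (Suc b) 0 = vv m b 0"
proof -
  assume m: "m \<ge> 1" and b: "Suc b < m"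
  have "walk_count m (Suc b) 0 (int (Suc b)) = walk_count m b 0 (int b) + walk_count m b 0 (int b + 2)"
    using wc_Suc[of "int (Suc b)" m b] b by (simp add: algebra_simps)
  then show ?thesis using wc_far[OF m, of b "int b + 2"] by (simp add: vv_def)
qed

lemma vv_bSuc: "m \<ge> 1 \<Longrightarrow> Suc b < m \<Longrightarrow> vv m (Suc b) (Suc n) = vv m b (Suc n) + vv m (Suc (Suc b)) n"
proof -
  assume m: "m \<ge> 1" and b: "Suc b < m"
  have "walk_count m (Suc (b + 2 * Suc n)) 0 (int (Suc b)) = walk_count m (b + 2 * Suc n) 0 (int b) + walk_count m (b + 2 * Suc n) 0 (int b + 2)"
    using wc_Suc[of "int (Suc b)" m "b + 2 * Suc n"] b by (simp add: algebra_simps)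
  moreover have "b + 2 * Suc n = Suc (Suc b) + 2 * n" by simp
  ultimately show ?thesis by (simp add: vv_def algebra_simps)
qed

lemma vv_out: "m \<le> b \<Longrightarrow> vv m b n = 0"
  by (simp add: vv_def wc_out)

abbreviation PP :: "nat \<Rightarrow> rat fps" where "PP n \<equiv> fps_of_poly (pp n)"

lemma fps_of_poly_X01: "fps_of_poly [:0, 1:] = (fps_X :: 'a::comm_ring_1 fps)"
  by (simp add: fps_of_poly_pCons)

lemma PP_rec: "PP (Suc (Suc r)) = PP (Suc r) - fps_X * PP r"
  by (simp add: fps_of_poly_diff fps_of_poly_mult fps_of_poly_X01 del: pp.simps)
    (simp add: fps_of_poly_diff fps_of_poly_mult fps_of_poly_X01)

declare pp.simps(3)[simp del]

lemma PP_0: "PP n $ 0 = 1" by simp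

lemma PP_inv: "PP n * inverse (PP n) = 1"
  by (rule inverse_mult_eq_1') simp

definition VV :: "nat \<Rightarrow> nat \<Rightarrow> rat fps" where
  "VV m b = (if b < m then PP (m - 1 - b) * inverse (PP m) else 0)"

lemma VV_0:
  assumes m: "m \<ge> 1"
  shows "VV m 0 = 1 + fps_X * VV m 1"
proof (cases "m = 1")
  case True
  have "PP 1 = 1" by simp
  then have "inverse (PP 1) = 1" by simp
  then show ?thesis using True by (simp add: VV_def)
next
  case False
  define r where "r = m - 2"
  have r: "m = Suc (Suc r)" using m False by (simp add: r_def)
  define J where "J = inverse (PP m)"
  have e: "PP m = PP (Suc r) - fps_X * PP r" unfolding r by (rule PP_rec)
  have "PP m * J = 1" unfolding J_def by (rule PP_inv)
  then have "(PP (Suc r) - fps_X * PP r) * J = 1" using e by simp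
  then have "PP (Suc r) * J = 1 + fps_X * (PP r * J)"
    by (simp add: algebra_simps)
  then have "PP (Suc r) * inverse (PP m) = 1 + fps_X * (PP r * inverse (PP m))"
    by (simp add: J_def)
  then show ?thesis using r by (simp add: VV_def)
qed

lemma VV_Suc:
  assumes b: "Suc b < m"
  shows "VV m (Suc b) = VV m b + fps_X * VV m (Suc (Suc b))"
proof (cases "Suc (Suc b) < m")
  case True
  define r where "r = m - 3 - b"
  have r: "m - 1 - b = Suc (Suc r)" using True by (simp add: r_def)
  have r2: "m - 1 - Suc b = Suc r" and r3: "m - 1 - Suc (Suc b) = r" using r by auto
  have e: "PP (Suc r) = PP (Suc (Suc r)) + fps_X * PP r" by (subst PP_rec) simp
  define J where "J = inverse (PP m)"
  have "PP (Suc r) * J = PP (Suc (Suc r)) * J + fps_X * (PP r * J)"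
    by (subst e) (simp add: algebra_simps)
  then show ?thesis using True b r r2 r3 by (simp add: VV_def J_def)
next
  case False
  then have "m - 1 - Suc b = 0" "m - 1 - b = 1" using b by auto
  then show ?thesis using False b by (simp add: VV_def)
qed

lemma VV_vv:
  assumes m: "m \<ge> 1"
  shows "VV m b $ n = of_nat (vv m b n)"
proof (induction n arbitrary: b)
  case 0
  show ?case
  proof (induction b)
    case 0 then show ?case using m by (simp add: VV_0 vv_00)
  next
    case (Suc b)
    show ?case
    proof (cases "Suc b < m")
      case True
      then show ?thesis using Suc m by (simp add: VV_Suc vv_b0)
    next
      case False then show ?thesis by (simp add: VV_def vv_out)
    qed
  qed
next
  case (Suc n)
  note IHn = Suc.IH
  show ?case
  proof (induction b)
    case 0 then show ?case using m IHn by (simp add: VV_0 vv_0Suc)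
  next
    case (Suc b)
    show ?case
    proof (cases "Suc b < m")
      case True
      then show ?thesis using Suc m IHn by (simp add: VV_Suc vv_bSuc)
    next
      case False then show ?thesis by (simp add: VV_def vv_out)
    qed
  qed
qed

lemma inv_PP_nth:
  assumes m: "m \<ge> 1"
  shows "inverse (PP m) $ u = of_nat (Bm m u)"
proof -
  have "inverse (PP m) = VV m (m - 1)" using m by (simp add: VV_def)
  then have "inverse (PP m) $ u = of_nat (vv m (m - 1) u)" using VV_vv[OF m] by simp
  moreover have "vv m (m - 1) u = Bm m u" using m by (simp add: vv_def Bm_def of_nat_diff)
  ultimately show ?thesis by simp
qed

definition LS :: "nat \<Rightarrow> nat \<Rightarrow> nat list set" where
  "LS n r = {js. length js = n \<and> sum_list js = r}"

lemma finite_LS: "finite (LS n r)"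
proof -
  have "LS n r \<subseteq> {js. set js \<subseteq> {0..r} \<and> length js = n}"
    by (auto simp: LS_def member_le_sum_list)
  moreover have "finite {js. set js \<subseteq> {0..r} \<and> length js = n}"
    by (rule finite_lists_length_eq) simp
  ultimately show ?thesis by (rule finite_subset)
qed

lemma LS_0: "LS 0 r = (if r = 0 then {[]} else {})"
  by (auto simp: LS_def)

lemma prod_list_fps_nth:
  "prod_list fs $ r = (\<Sum>js\<in>LS (length fs) r. \<Prod>i<length fs. (fs ! i :: 'a::comm_ring_1 fps) $ (js ! i))"
proof (induction fs arbitrary: r)
  case Nil then show ?case by (simp add: LS_0)
next
  case (Cons f fs)
  define n where "n = length fs"
  have "prod_list (f # fs) $ r = (\<Sum>i=0..r. f $ i * prod_list fs $ (r - i))"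
    by (simp add: fps_mult_nth)
  also have "\<dots> = (\<Sum>i=0..r. \<Sum>js\<in>LS n (r - i). f $ i * (\<Prod>l<n. fs ! l $ (js ! l)))"
    by (simp add: Cons n_def sum_distrib_left)
  also have "\<dots> = (\<Sum>p\<in>Sigma {0..r} (\<lambda>i. LS n (r - i)). f $ fst p * (\<Prod>l<n. fs ! l $ (snd p ! l)))"
    by (subst sum.Sigma) (auto simp: finite_LS split_def)
  also have "\<dots> = (\<Sum>js\<in>LS (Suc n) r. \<Prod>i<Suc n. (f # fs) ! i $ (js ! i))"
  proof (rule sum.reindex_bij_witness[where j = "\<lambda>p. fst p # snd p" and i = "\<lambda>js. (hd js, tl js)"])
    fix js assume "js \<in> LS (Suc n) r"
    then show "(hd js, tl js) \<in> Sigma {0..r} (\<lambda>i. LS n (r - i))"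
      by (cases js) (auto simp: LS_def)
  next
    fix js assume "js \<in> LS (Suc n) r"
    then show "fst (hd js, tl js) # snd (hd js, tl js) = js" by (cases js) (auto simp: LS_def)
  next
    fix p assume "p \<in> Sigma {0..r} (\<lambda>i. LS n (r - i))"
    then show "fst p # snd p \<in> LS (Suc n) r" by (auto simp: LS_def)
  next
    fix p assume "p \<in> Sigma {0..r} (\<lambda>i. LS n (r - i))"
    then show "(hd (fst p # snd p), tl (fst p # snd p)) = p" by auto
  next
    fix p assume "p \<in> Sigma {0..r} (\<lambda>i. LS n (r - i))"
    show "(\<Prod>i<Suc n. (f # fs) ! i $ ((fst p # snd p) ! i)) = f $ fst p * (\<Prod>l<n. fs ! l $ (snd p ! l))"
      by (simp only: prod.lessThan_Suc_shift) simp
  qed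
  finally show ?case by (simp add: n_def)
qed

lemma fps_mult_nth_pairs:
  fixes A B :: "'a::comm_ring_1 fps"
  assumes A: "\<And>i. A $ i = (\<Sum>js\<in>LS a i. g js)"
    and B: "\<And>i. B $ i = (\<Sum>us\<in>LS k i. h us)"
  shows "(A * B) $ r = (\<Sum>(js, us) \<in> {(js, us). length js = a \<and> length us = k \<and>
                              sum_list js + sum_list us = r}. g js * h us)"
proof -
  have "(A * B) $ r = (\<Sum>i=0..r. (\<Sum>js\<in>LS a i. g js) * (\<Sum>us\<in>LS k (r - i). h us))"
    by (simp add: fps_mult_nth A B)
  also have "\<dots> = (\<Sum>i=0..r. \<Sum>q\<in>LS a i \<times> LS k (r - i). g (fst q) * h (snd q))"
    by (simp add: sum_product sum.cartesian_product split_def)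
  also have "\<dots> = (\<Sum>p\<in>Sigma {0..r} (\<lambda>i. LS a i \<times> LS k (r - i)). g (fst (snd p)) * h (snd (snd p)))"
    by (subst sum.Sigma) (auto simp: finite_LS split_def)
  also have "\<dots> = (\<Sum>(js, us) \<in> {(js, us). length js = a \<and> length us = k \<and>
                              sum_list js + sum_list us = r}. g js * h us)"
  proof (rule sum.reindex_bij_witness[where j = "\<lambda>p. snd p" and i = "\<lambda>q. (sum_list (fst q), q)"])
    fix q assume "q \<in> {(js, us). length js = a \<and> length us = k \<and> sum_list js + sum_list us = r}"
    then show "(sum_list (fst q), q) \<in> Sigma {0..r} (\<lambda>i. LS a i \<times> LS k (r - i))"
      by (auto simp: LS_def)
  next
    fix q show "snd (sum_list (fst q), q) = q" by simp
  next
    fix p assume "p \<in> Sigma {0..r} (\<lambda>i. LS a i \<times> LS k (r - i))"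
    then show "snd p \<in> {(js, us). length js = a \<and> length us = k \<and> sum_list js + sum_list us = r}"
      by (auto simp: LS_def)
  next
    fix p assume "p \<in> Sigma {0..r} (\<lambda>i. LS a i \<times> LS k (r - i))"
    then show "(sum_list (fst (snd p)), snd p) = p" by (auto simp: LS_def)
  next
    fix p show "(case snd p of (js, us) \<Rightarrow> g js * h us) = g (fst (snd p)) * h (snd (snd p))"
      by (simp add: case_prod_beta)
  qed
  finally show ?thesis .
qed

definition EP :: "nat \<Rightarrow> nat set set" where
  "EP n = {{i, i + 1} | i. 1 \<le> i \<and> i < n}"

definition MS :: "nat \<Rightarrow> nat \<Rightarrow> nat set set set" where
  "MS n j = {M. path_matching n M \<and> card M = j}"

lemma EP_img: "EP n = (\<lambda>i. {i, Suc i}) ` {1..<n}"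
  unfolding EP_def by (auto simp: image_def)

lemma finite_EP: "finite (EP n)" by (simp add: EP_img)

lemma pm_EP: "path_matching n M \<longleftrightarrow> M \<subseteq> EP n \<and> (\<forall>e\<in>M. \<forall>e'\<in>M. e \<noteq> e' \<longrightarrow> e \<inter> e' = {})"
  by (simp add: path_matching_def EP_def)

lemma pm_finite: "path_matching n M \<Longrightarrow> finite M"
proof -
  assume "path_matching n M"
  then have "M \<subseteq> EP n" by (simp add: pm_EP)
  then show "finite M" using finite_EP by (rule finite_subset)
qed

lemma MS_0: "MS n 0 = {{}}"
proof (rule set_eqI)
  fix M
  show "M \<in> MS n 0 \<longleftrightarrow> M \<in> {{}}"
  proof
    assume "M \<in> MS n 0"
    then have "finite M" "card M = 0" by (auto simp: MS_def dest: pm_finite)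
    then show "M \<in> {{}}" by simp
  next
    assume "M \<in> {{}}"
    then show "M \<in> MS n 0" by (simp add: MS_def pm_EP)
  qed
qed

lemma EP_small: "n \<le> 1 \<Longrightarrow> EP n = {}" by (auto simp: EP_def)

lemma MS_small: "n \<le> 1 \<Longrightarrow> MS n (Suc j) = {}"
  by (auto simp: MS_def pm_EP EP_small)

lemma edge_eq: "({i, Suc i} = {a, Suc a}) \<longleftrightarrow> i = a"
  by (auto simp: doubleton_eq_iff)

lemma EP_Suc: "n \<ge> 1 \<Longrightarrow> EP (Suc n) = insert {n, Suc n} (EP n)"
  by (auto simp: EP_img)

lemma in_EP: "x \<in> EP n \<longleftrightarrow> (\<exists>i. x = {i, Suc i} \<and> 1 \<le> i \<and> i < n)"
  by (auto simp: EP_img)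

lemma edge_in_EP: "{a, Suc a} \<in> EP n \<longleftrightarrow> 1 \<le> a \<and> a < n"
  by (auto simp: EP_img edge_eq)

lemma EP_mono: "n \<le> n' \<Longrightarrow> EP n \<subseteq> EP n'"
  unfolding subset_iff in_EP using less_le_trans by blast

lemma MS_SucSuc:
  "MS (Suc (Suc n)) (Suc j) = MS (Suc n) (Suc j) \<union> insert {Suc n, Suc (Suc n)} ` MS n j"
    (is "?L = ?A \<union> ?B")
proof
  let ?e = "{Suc n, Suc (Suc n)}"
  show "?L \<subseteq> ?A \<union> ?B"
  proof
    fix M assume M: "M \<in> ?L"
    then have sub: "M \<subseteq> EP (Suc (Suc n))" and dis: "\<forall>e\<in>M. \<forall>e'\<in>M. e \<noteq> e' \<longrightarrow> e \<inter> e' = {}"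
      and cM: "card M = Suc j"
      by (simp_all add: MS_def pm_EP)
    have fM: "finite M" using M unfolding MS_def by (blast dest: pm_finite)
    show "M \<in> ?A \<union> ?B"
    proof (cases "?e \<in> M")
      case False
      have "EP (Suc (Suc n)) = insert ?e (EP (Suc n))" by (rule EP_Suc) simp
      then have "M \<subseteq> insert ?e (EP (Suc n))" using sub by simp
      then have "M \<subseteq> EP (Suc n)" using False by (simp add: subset_insert)
      then have "M \<in> ?A" using dis cM by (simp add: MS_def pm_EP)
      then show ?thesis by blast
    next
      case True
      define M' where "M' = M - {?e}"
      have Meq: "M = insert ?e M'" using True unfolding M'_def by blast
      have "M' \<subseteq> EP n"
      proof
        fix x assume x: "x \<in> M'"
        then have xM: "x \<in> M" and xe: "x \<noteq> ?e" unfolding M'_def by blast+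
        then have "x \<in> EP (Suc (Suc n))" using sub by blast
        then obtain i where i: "x = {i, Suc i}" "1 \<le> i" "i < Suc (Suc n)"
          unfolding in_EP by blast
        have "i \<noteq> Suc n" using i xe by auto
        moreover have "i \<noteq> n"
        proof
          assume "i = n"
          then have "Suc n \<in> x \<inter> ?e" using i by simp
          then have "x \<inter> ?e \<noteq> {}" by blast
          moreover have "x \<inter> ?e = {}" using bspec[OF bspec[OF dis xM] True] xe by simp
          ultimately show False by simp
        qed
        ultimately have "i < n" using i by simp
        then show "x \<in> EP n" using i by (simp add: edge_in_EP)
      qed
      moreover have "card M' = j" using cM fM True by (simp add: M'_def)
      moreover have "\<forall>e\<in>M'. \<forall>e'\<in>M'. e \<noteq> e' \<longrightarrow> e \<inter> e' = {}" using dis unfolding M'_def by blast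
      ultimately have "M' \<in> MS n j" by (simp add: MS_def pm_EP)
      then show ?thesis using Meq by blast
    qed
  qed
next
  let ?e = "{Suc n, Suc (Suc n)}"
  show "?A \<union> ?B \<subseteq> ?L"
  proof
    fix M assume "M \<in> ?A \<union> ?B"
    then show "M \<in> ?L"
    proof
      assume MA: "M \<in> ?A"
      have "EP (Suc n) \<subseteq> EP (Suc (Suc n))" by (rule EP_mono) simp
      then show ?thesis using MA unfolding MS_def pm_EP by blast
    next
      assume "M \<in> ?B"
      then obtain M' where Meq: "M = insert {Suc n, Suc (Suc n)} M'" and M': "M' \<in> MS n j" by blast
      have sub: "M' \<subseteq> EP n" and dis: "\<forall>e\<in>M'. \<forall>e'\<in>M'. e \<noteq> e' \<longrightarrow> e \<inter> e' = {}"
        and cM: "card M' = j"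
        using M' by (simp_all add: MS_def pm_EP)
      have fM: "finite M'" using M' unfolding MS_def by (blast dest: pm_finite)
      have "?e \<notin> EP n" by (simp add: edge_in_EP)
      then have notin: "?e \<notin> M'" using sub by blast
      have "?e \<in> EP (Suc (Suc n))" by (simp add: edge_in_EP)
      moreover have "EP n \<subseteq> EP (Suc (Suc n))" by (rule EP_mono) simp
      ultimately have sub2: "M \<subseteq> EP (Suc (Suc n))" using sub Meq by blast
      have disj_e: "x \<inter> ?e = {}" if xM': "x \<in> M'" for x
      proof -
        have "x \<in> EP n" using sub xM' by blast
        then obtain i where i: "x = {i, Suc i}" "i < n" unfolding in_EP by blast
        then show ?thesis by auto
      qed
      have "\<forall>e\<in>M. \<forall>e'\<in>M. e \<noteq> e' \<longrightarrow> e \<inter> e' = {}"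
      proof (intro ballI impI)
        fix e e' assume "e \<in> M" "e' \<in> M" "e \<noteq> e'"
        then consider "e = ?e" "e' \<in> M'" | "e' = ?e" "e \<in> M'" | "e \<in> M'" "e' \<in> M'"
          using Meq by blast
        then show "e \<inter> e' = {}"
        proof cases
          case 1 then show ?thesis using disj_e[of e'] by blast
        next
          case 2 then show ?thesis using disj_e[of e] by blast
        next
          case 3 then show ?thesis using dis \<open>e \<noteq> e'\<close> by blast
        qed
      qed
      moreover have "card M = Suc j" using Meq notin fM cM by simp
      ultimately show ?thesis using sub2 by (simp add: MS_def pm_EP)
    qed
  qed
qed

lemma finite_MS: "finite (MS n j)"
proof -
  have "MS n j \<subseteq> Pow (EP n)" by (auto simp: MS_def pm_EP)
  then show ?thesis using finite_EP finite_subset by blast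
qed

lemma card_MS: "card (MS n j) = (n - j) choose j"
proof (induction n arbitrary: j rule: pp.induct)
  case 1 then show ?case by (cases j) (auto simp: MS_0 MS_small)
next
  case 2 then show ?case by (cases j) (auto simp: MS_0 MS_small)
next
  case (3 n)
  show ?case
  proof (cases j)
    case 0 then show ?thesis by (simp add: MS_0)
  next
    case (Suc i)
    let ?e = "{Suc n, Suc (Suc n)}"
    have eEP: "?e \<notin> EP (Suc n)" "?e \<notin> EP n" by (simp_all add: edge_in_EP)
    have notin: "\<And>M. M \<in> MS (Suc n) (Suc i) \<Longrightarrow> ?e \<notin> M"
      using eEP(1) unfolding MS_def pm_EP by blast
    have disj: "MS (Suc n) (Suc i) \<inter> insert ?e ` MS n i = {}" using notin by blast
    have inj: "inj_on (insert ?e) (MS n i)"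
    proof (rule inj_onI)
      fix x y assume "x \<in> MS n i" "y \<in> MS n i" "insert ?e x = insert ?e y"
      moreover have "?e \<notin> x" "?e \<notin> y" using \<open>x \<in> MS n i\<close> \<open>y \<in> MS n i\<close> eEP(2)
        unfolding MS_def pm_EP by blast+
      ultimately show "x = y" by (metis insert_ident)
    qed
    have "card (MS (Suc (Suc n)) j) = card (MS (Suc n) (Suc i)) + card (insert ?e ` MS n i)"
      unfolding Suc MS_SucSuc by (rule card_Un_disjoint) (auto simp: finite_MS disj)
    also have "\<dots> = card (MS (Suc n) (Suc i)) + card (MS n i)" using inj by (simp add: card_image)
    also have "\<dots> = ((n - i) choose Suc i) + ((n - i) choose i)" using 3 by simp
    also have "\<dots> = (Suc (Suc n) - j) choose j"
    proof (cases "i \<le> n")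
      case True
      then have "Suc (Suc n) - j = Suc (n - i)" using Suc by simp
      then show ?thesis using Suc by (simp add: add.commute)
    next
      case False
      then show ?thesis using Suc by (cases i) auto
    qed
    finally show ?thesis .
  qed
qed

lemma sw_dist:
  assumes sw: "strip_walk m hs"
  shows "i < length hs \<Longrightarrow> \<bar>hs ! i - hs ! 0\<bar> \<le> int i \<and> even (hs ! i - hs ! 0 - int i)"
proof (induction i)
  case 0 then show ?case by simp
next
  case (Suc i)
  then have IH: "\<bar>hs ! i - hs ! 0\<bar> \<le> int i" "even (hs ! i - hs ! 0 - int i)" by auto
  have st: "\<bar>hs ! Suc i - hs ! i\<bar> = 1" using sw Suc.prems by (simp add: strip_walk_def)
  then have "hs ! Suc i = hs ! i + 1 \<or> hs ! Suc i = hs ! i - 1" by auto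
  then show ?case
  proof
    assume e: "hs ! Suc i = hs ! i + 1"
    have "hs ! Suc i - hs ! 0 - int (Suc i) = hs ! i - hs ! 0 - int i" using e by simp
    then show ?thesis using IH e by auto
  next
    assume e: "hs ! Suc i = hs ! i - 1"
    have "hs ! Suc i - hs ! 0 - int (Suc i) = (hs ! i - hs ! 0 - int i) - 2" using e by simp
    then show ?thesis using IH e by auto
  qed
qed

definition GW :: "nat \<Rightarrow> nat \<Rightarrow> int list set" where
  "GW m u = {\<gamma>. full_height_walk m \<gamma> \<and> excess m \<gamma> = u}"

lemma GW_WS:
  assumes m: "m \<ge> 1"
  shows "GW m u = WS m (m - 1 + 2 * u) (int m - 1)"
proof (rule set_eqI)
  fix hs
  show "hs \<in> GW m u \<longleftrightarrow> hs \<in> WS m (m - 1 + 2 * u) (int m - 1)"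
  proof
    assume "hs \<in> GW m u"
    then have sw: "strip_walk m hs" and h: "hd hs = 0" and l: "last hs = int m - 1"
      and ex: "excess m hs = u" by (auto simp: GW_def full_height_walk_def)
    have ne: "hs \<noteq> []" using sw by (simp add: strip_walk_def)
    define N where "N = length hs - 1"
    have len: "length hs = Suc N" using ne by (simp add: N_def)
    have h0: "hs ! 0 = 0" using h ne by (simp add: hd_conv_nth)
    have hN: "hs ! N = int m - 1" using l ne by (simp add: last_conv_nth N_def)
    have d: "\<bar>hs ! N - hs ! 0\<bar> \<le> int N \<and> even (hs ! N - hs ! 0 - int N)"
      using sw_dist[OF sw, of N] len by simp
    then have d1: "int m - 1 \<le> int N" and d2: "even (int m - 1 - int N)" using h0 hN by auto
    have "m - 1 \<le> N" using d1 m by linarith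
    moreover have "even (N - (m - 1))"
    proof -
      have e1: "int (N - (m - 1)) = - (int m - 1 - int N)" using d1 m by (simp add: of_nat_diff)
      have "even (- (int m - 1 - int N))" using d2 by (simp only: even_minus)
      then have "even (int (N - (m - 1)))" unfolding e1 .
      then show ?thesis by simp
    qed
    moreover have "(N - (m - 1)) div 2 = u" using ex by (simp add: excess_def N_def)
    ultimately have "N - (m - 1) = 2 * u" by (metis dvd_mult_div_cancel)
    then have "N = m - 1 + 2 * u" using \<open>m - 1 \<le> N\<close> by arith
    then show "hs \<in> WS m (m - 1 + 2 * u) (int m - 1)"
      using sw len h0 hN by (simp add: WS_def)
  next
    assume "hs \<in> WS m (m - 1 + 2 * u) (int m - 1)"
    then have sw: "strip_walk m hs" and len: "length hs = Suc (m - 1 + 2 * u)"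
      and h0: "hs ! 0 = 0" and hN: "hs ! (m - 1 + 2 * u) = int m - 1"
      by (auto simp: WS_def)
    have ne: "hs \<noteq> []" using len by auto
    have "hd hs = 0" using h0 ne by (simp add: hd_conv_nth)
    moreover have "last hs = int m - 1" using hN ne len by (simp add: last_conv_nth)
    moreover have "excess m hs = u" using len by (simp add: excess_def)
    ultimately show "hs \<in> GW m u" using sw by (simp add: GW_def full_height_walk_def)
  qed
qed

lemma card_GW: "m \<ge> 1 \<Longrightarrow> card (GW m u) = Bm m u"
  by (simp add: GW_WS Bm_def wc_WS)

lemma card_lists_nth:
  "card {xs. length xs = n \<and> (\<forall>i<n. xs ! i \<in> A i)} = (\<Prod>i<n. card (A i))"
proof (induction n arbitrary: A)
  case 0
  have "{xs. length xs = 0 \<and> (\<forall>i<0. xs ! i \<in> A i)} = {[]}" by auto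
  then show ?case by simp
next
  case (Suc n)
  let ?R = "{xs. length xs = n \<and> (\<forall>i<n. xs ! i \<in> A (Suc i))}"
  have eq: "{xs. length xs = Suc n \<and> (\<forall>i<Suc n. xs ! i \<in> A i)} = (\<lambda>p. fst p # snd p) ` (A 0 \<times> ?R)"
  proof (rule set_eqI)
    fix xs
    show "xs \<in> {xs. length xs = Suc n \<and> (\<forall>i<Suc n. xs ! i \<in> A i)} \<longleftrightarrow> xs \<in> (\<lambda>p. fst p # snd p) ` (A 0 \<times> ?R)"
    proof
      assume a: "xs \<in> {xs. length xs = Suc n \<and> (\<forall>i<Suc n. xs ! i \<in> A i)}"
      then obtain y ys where xs: "xs = y # ys" by (cases xs) auto
      have "y \<in> A 0" using a xs by auto
      moreover have "ys \<in> ?R"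
      proof -
        have "length ys = n" using a xs by simp
        moreover have "\<forall>i<n. ys ! i \<in> A (Suc i)"
        proof (intro allI impI)
          fix i assume "i < n"
          then have "xs ! Suc i \<in> A (Suc i)" using a by simp
          then show "ys ! i \<in> A (Suc i)" using xs by simp
        qed
        ultimately show ?thesis by simp
      qed
      ultimately have "(y, ys) \<in> A 0 \<times> ?R" by simp
      then show "xs \<in> (\<lambda>p. fst p # snd p) ` (A 0 \<times> ?R)" using xs by (intro rev_image_eqI[of "(y, ys)"]) simp_all
    next
      assume "xs \<in> (\<lambda>p. fst p # snd p) ` (A 0 \<times> ?R)"
      then obtain y ys where xs: "xs = y # ys" and y: "y \<in> A 0" and ys: "ys \<in> ?R" by auto
      have "\<forall>i<Suc n. xs ! i \<in> A i"
      proof (intro allI impI)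
        fix i assume "i < Suc n"
        then show "xs ! i \<in> A i" using xs y ys by (cases i) auto
      qed
      then show "xs \<in> {xs. length xs = Suc n \<and> (\<forall>i<Suc n. xs ! i \<in> A i)}" using xs ys by simp
    qed
  qed
  have "card ((\<lambda>p. fst p # snd p) ` (A 0 \<times> ?R)) = card (A 0 \<times> ?R)"
    by (rule card_image) (auto simp: inj_on_def)
  also have "\<dots> = card (A 0) * (\<Prod>i<n. card (A (Suc i)))"
    using Suc.IH[of "\<lambda>i. A (Suc i)"] by (simp add: card_cartesian_product)
  also have "\<dots> = (\<Prod>i<Suc n. card (A i))" by (simp only: prod.lessThan_Suc_shift)
  finally show ?case using eq by simp
qed

definition TT :: "nat \<Rightarrow> nat list \<Rightarrow> nat \<Rightarrow> nat \<Rightarrow> nat \<Rightarrow> (nat set set list \<times> int list list) set" where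
  "TT m \<alpha> n k r = {(Ms, \<gamma>s). length Ms = n \<and>
                                        (\<forall>i<n. path_matching (\<alpha> ! i) (Ms ! i)) \<and>
                                        length \<gamma>s = k \<and>
                                        (\<forall>\<gamma> \<in> set \<gamma>s. full_height_walk m \<gamma>) \<and>
                                        sum_list (map card Ms) + sum_list (map (excess m) \<gamma>s) = r}"

definition SS :: "nat \<Rightarrow> nat \<Rightarrow> nat \<Rightarrow> (nat list \<times> nat list) set" where
  "SS n k r = {(js, us). length js = n \<and> length us = k \<and> sum_list js + sum_list us = r}"

lemma finite_SS: "finite (SS n k r)"
proof -
  have "SS n k r \<subseteq> {js. set js \<subseteq> {0..r} \<and> length js = n} \<times> {us. set us \<subseteq> {0..r} \<and> length us = k}"
  proof
    fix p assume p: "p \<in> SS n k r"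
    obtain js us where pe: "p = (js, us)" by (cases p)
    have "\<forall>x\<in>set js. x \<le> r" using p pe by (auto simp: SS_def dest!: member_le_sum_list)
    moreover have "\<forall>x\<in>set us. x \<le> r" using p pe by (auto simp: SS_def dest!: member_le_sum_list)
    ultimately show "p \<in> {js. set js \<subseteq> {0..r} \<and> length js = n} \<times> {us. set us \<subseteq> {0..r} \<and> length us = k}"
      using p pe by (auto simp: SS_def)
  qed
  moreover have "finite ({js. set js \<subseteq> {0..r} \<and> length js = n} \<times> {us. set us \<subseteq> {0..r} \<and> length us = k})"
    by (intro finite_cartesian_product finite_lists_length_eq) simp_all
  ultimately show ?thesis by (rule finite_subset)
qed

lemma excess_len: "length \<gamma> \<le> m + 2 * excess m \<gamma> + 2"
proof -
  define x where "x = length \<gamma> - 1 - (m - 1)"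
  have "x \<le> 2 * (x div 2) + 1" by presburger
  moreover have "length \<gamma> \<le> x + m + 1" unfolding x_def by arith
  ultimately show ?thesis by (simp add: excess_def x_def)
qed

lemma finite_TT: "finite (TT m \<alpha> n k r)"
proof -
  define U where "U = (\<Union>i<n. EP (\<alpha> ! i))"
  define W where "W = {\<gamma>::int list. set \<gamma> \<subseteq> {0..int m - 1} \<and> length \<gamma> \<le> m + 2 * r + 2}"
  have fU: "finite U" by (simp add: U_def finite_EP)
  have fW: "finite W" unfolding W_def by (rule finite_lists_length_le) simp
  have "TT m \<alpha> n k r \<subseteq> {Ms. set Ms \<subseteq> Pow U \<and> length Ms = n} \<times> {\<gamma>s. set \<gamma>s \<subseteq> W \<and> length \<gamma>s = k}"
  proof
    fix p assume p: "p \<in> TT m \<alpha> n k r"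
    obtain Ms \<gamma>s where pe: "p = (Ms, \<gamma>s)" by (cases p)
    have lM: "length Ms = n" and pm: "\<forall>i<n. path_matching (\<alpha> ! i) (Ms ! i)"
      and lg: "length \<gamma>s = k" and fh: "\<forall>\<gamma> \<in> set \<gamma>s. full_height_walk m \<gamma>"
      and sm: "sum_list (map card Ms) + sum_list (map (excess m) \<gamma>s) = r"
      using p pe by (simp_all add: TT_def)
    have "set Ms \<subseteq> Pow U"
    proof
      fix M assume "M \<in> set Ms"
      then obtain i where i: "i < n" "M = Ms ! i" using lM by (auto simp: in_set_conv_nth)
      then have "M \<subseteq> EP (\<alpha> ! i)" using pm by (simp add: pm_EP)
      then show "M \<in> Pow U" using i by (auto simp: U_def)
    qed
    moreover have "set \<gamma>s \<subseteq> W"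
    proof
      fix \<gamma> assume g: "\<gamma> \<in> set \<gamma>s"
      then have sw: "strip_walk m \<gamma>" using fh by (simp add: full_height_walk_def)
      have "excess m \<gamma> \<in> set (map (excess m) \<gamma>s)" using g by simp
      then have "excess m \<gamma> \<le> sum_list (map (excess m) \<gamma>s)" by (rule member_le_sum_list) simp
      then have "excess m \<gamma> \<le> r" using sm by simp
      then have "length \<gamma> \<le> m + 2 * r + 2" using excess_len[of \<gamma> m] by simp
      moreover have "set \<gamma> \<subseteq> {0..int m - 1}" using sw by (auto simp: strip_walk_def)
      ultimately show "\<gamma> \<in> W" by (simp add: W_def)
    qed
    ultimately show "p \<in> {Ms. set Ms \<subseteq> Pow U \<and> length Ms = n} \<times> {\<gamma>s. set \<gamma>s \<subseteq> W \<and> length \<gamma>s = k}"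
      using pe lM lg by simp
  qed
  moreover have "finite ({Ms. set Ms \<subseteq> Pow U \<and> length Ms = n} \<times> {\<gamma>s. set \<gamma>s \<subseteq> W \<and> length \<gamma>s = k})"
    using fU fW by (intro finite_cartesian_product finite_lists_length_eq) simp_all
  ultimately show ?thesis by (rule finite_subset)
qed

definition FM :: "nat list \<Rightarrow> nat \<Rightarrow> nat list \<Rightarrow> nat set set list set" where
  "FM \<alpha> n js = {Ms. length Ms = n \<and> (\<forall>i<n. Ms ! i \<in> MS (\<alpha> ! i) (js ! i))}"

definition FG :: "nat \<Rightarrow> nat \<Rightarrow> nat list \<Rightarrow> int list list set" where
  "FG m k us = {\<gamma>s. length \<gamma>s = k \<and> (\<forall>i<k. \<gamma>s ! i \<in> GW m (us ! i))}"

lemma fiber: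
  assumes "(js, us) \<in> SS n k r"
  shows "{x \<in> TT m \<alpha> n k r. (map card (fst x), map (excess m) (snd x)) = (js, us)} = FM \<alpha> n js \<times> FG m k us"
proof (rule set_eqI)
  fix x :: "nat set set list \<times> int list list"
  obtain Ms \<gamma>s where xe: "x = (Ms, \<gamma>s)" by (cases x)
  have lj: "length js = n" and lu: "length us = k" and su: "sum_list js + sum_list us = r"
    using assms by (simp_all add: SS_def)
  show "x \<in> {x \<in> TT m \<alpha> n k r. (map card (fst x), map (excess m) (snd x)) = (js, us)} \<longleftrightarrow> x \<in> FM \<alpha> n js \<times> FG m k us"
  proof
    assume a: "x \<in> {x \<in> TT m \<alpha> n k r. (map card (fst x), map (excess m) (snd x)) = (js, us)}"
    have lM: "length Ms = n" and pm: "\<forall>i<n. path_matching (\<alpha> ! i) (Ms ! i)"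
      and lg: "length \<gamma>s = k" and fh: "\<forall>\<gamma> \<in> set \<gamma>s. full_height_walk m \<gamma>"
      and mc: "map card Ms = js" and me: "map (excess m) \<gamma>s = us"
      using a xe by (simp_all add: TT_def)
    have "\<forall>i<n. Ms ! i \<in> MS (\<alpha> ! i) (js ! i)"
    proof (intro allI impI)
      fix i assume i: "i < n"
      have "card (Ms ! i) = js ! i" using mc i lM by (metis nth_map)
      then show "Ms ! i \<in> MS (\<alpha> ! i) (js ! i)" using pm i by (simp add: MS_def)
    qed
    moreover have "\<forall>i<k. \<gamma>s ! i \<in> GW m (us ! i)"
    proof (intro allI impI)
      fix i assume i: "i < k"
      have "excess m (\<gamma>s ! i) = us ! i" using me i lg by (metis nth_map)
      moreover have "full_height_walk m (\<gamma>s ! i)" using fh i lg by simp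
      ultimately show "\<gamma>s ! i \<in> GW m (us ! i)" by (simp add: GW_def)
    qed
    ultimately show "x \<in> FM \<alpha> n js \<times> FG m k us" using xe lM lg by (simp add: FM_def FG_def)
  next
    assume a: "x \<in> FM \<alpha> n js \<times> FG m k us"
    have lM: "length Ms = n" and mM: "\<forall>i<n. Ms ! i \<in> MS (\<alpha> ! i) (js ! i)"
      and lg: "length \<gamma>s = k" and mg: "\<forall>i<k. \<gamma>s ! i \<in> GW m (us ! i)"
      using a xe by (simp_all add: FM_def FG_def)
    have mc: "map card Ms = js"
      by (rule nth_equalityI) (use lM lj mM in \<open>auto simp: MS_def\<close>)
    have me: "map (excess m) \<gamma>s = us"
      by (rule nth_equalityI) (use lg lu mg in \<open>auto simp: GW_def\<close>)
    have pm: "\<forall>i<n. path_matching (\<alpha> ! i) (Ms ! i)" using mM by (simp add: MS_def)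
    have fh: "\<forall>\<gamma> \<in> set \<gamma>s. full_height_walk m \<gamma>"
    proof
      fix \<gamma> assume "\<gamma> \<in> set \<gamma>s"
      then obtain i where "i < k" "\<gamma> = \<gamma>s ! i" using lg by (auto simp: in_set_conv_nth)
      then show "full_height_walk m \<gamma>" using mg by (simp add: GW_def)
    qed
    show "x \<in> {x \<in> TT m \<alpha> n k r. (map card (fst x), map (excess m) (snd x)) = (js, us)}"
      using xe lM pm lg fh mc me su by (simp add: TT_def)
  qed
qed

lemma card_fiber:
  assumes "(js, us) \<in> SS n k r" and m: "m \<ge> 1"
  shows "card {x \<in> TT m \<alpha> n k r. (map card (fst x), map (excess m) (snd x)) = (js, us)}
     = (\<Prod>i<n. (\<alpha> ! i - js ! i) choose (js ! i)) * (\<Prod>i<k. Bm m (us ! i))"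
  unfolding fiber[OF assms(1)] card_cartesian_product FM_def FG_def card_lists_nth
  by (simp add: card_MS card_GW[OF m])

lemma second_sum:
  assumes m: "m \<ge> 1"
  shows "(\<Sum>(Ms, \<gamma>s) \<in> TT m \<alpha> n k r. (-1::int) ^ sum_list (map card Ms))
    = (\<Sum>(js, us) \<in> SS n k r. (-1) ^ sum_list js * (\<Prod>i<n. int ((\<alpha> ! i - js ! i) choose (js ! i)))
                 * (\<Prod>\<nu><k. int (Bm m (us ! \<nu>))))"
proof -
  let ?g = "\<lambda>x. (map card (fst x), map (excess m) (snd x))"
  let ?f = "\<lambda>(Ms, \<gamma>s). (-1::int) ^ sum_list (map card Ms)"
  have img: "?g ` TT m \<alpha> n k r \<subseteq> SS n k r" by (auto simp: TT_def SS_def)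
  have "(\<Sum>x \<in> TT m \<alpha> n k r. ?f x) = (\<Sum>y\<in>SS n k r. \<Sum>x\<in>{x \<in> TT m \<alpha> n k r. ?g x = y}. ?f x)"
    by (rule sum.group[symmetric, OF finite_TT finite_SS img])
  also have "\<dots> = (\<Sum>(js, us) \<in> SS n k r. (-1) ^ sum_list js * (\<Prod>i<n. int ((\<alpha> ! i - js ! i) choose (js ! i)))
                 * (\<Prod>\<nu><k. int (Bm m (us ! \<nu>))))"
  proof (rule sum.cong[OF refl])
    fix y assume y: "y \<in> SS n k r"
    obtain js us where ye: "y = (js, us)" by (cases y)
    have "(\<Sum>x\<in>{x \<in> TT m \<alpha> n k r. ?g x = y}. ?f x) = (\<Sum>x\<in>{x \<in> TT m \<alpha> n k r. ?g x = y}. (-1::int) ^ sum_list js)"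
      by (rule sum.cong) (auto simp: ye)
    also have "\<dots> = of_nat (card {x \<in> TT m \<alpha> n k r. ?g x = y}) * (-1) ^ sum_list js"
      by simp
    also have "\<dots> = (-1) ^ sum_list js * (\<Prod>i<n. int ((\<alpha> ! i - js ! i) choose (js ! i)))
                 * (\<Prod>\<nu><k. int (Bm m (us ! \<nu>)))"
      using card_fiber[OF y[unfolded ye] m, of \<alpha>] ye by (simp add: algebra_simps)
    finally show "(\<Sum>x\<in>{x \<in> TT m \<alpha> n k r. ?g x = y}. ?f x) = (case y of (js, us) \<Rightarrow> (-1) ^ sum_list js * (\<Prod>i<n. int ((\<alpha> ! i - js ! i) choose (js ! i)))
                 * (\<Prod>\<nu><k. int (Bm m (us ! \<nu>))))" using ye by simp
  qed
  finally show ?thesis .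
qed

theorem theorem1p2:
  fixes m \<mu> r :: nat and \<xi> :: "nat list"
  assumes "m \<ge> 1"
    and "sorted_wrt (\<ge>) \<xi>"
    and "\<forall>x \<in> set \<xi>. 0 < x \<and> x \<le> m"
    and "int (\<mu> div m) + 1 - int (count_list \<xi> m) \<ge> 0"
  shows
   "let \<mu>1 = \<mu> div m; \<mu>0 = \<mu> mod m; t = count_list \<xi> m;
        k = \<mu>1 + 1 - t;
        \<alpha> = (m - \<mu>0 - 1) # filter (\<lambda>x. x < m) \<xi>;
        L = length \<alpha> - 1;
        F = fps_of_poly (pp (m - \<mu>0 - 1) * prod_list (map pp \<xi>))
              * inverse (fps_of_poly (pp m)) ^ (\<mu>1 + 1) :: rat fps;
        a = fps_nth F r
    in a = of_int (\<Sum>(js, us) \<in> {(js, us). length js = L + 1 \<and> length us = k \<and>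
                                        sum_list js + sum_list us = r}.
                 (-1) ^ sum_list js
                 * (\<Prod>i<L + 1. int ((\<alpha> ! i - js ! i) choose (js ! i)))
                 * (\<Prod>\<nu><k. int (Bm m (us ! \<nu>))))
     \<and> a = of_int (\<Sum>(Ms, \<gamma>s) \<in> {(Ms, \<gamma>s). length Ms = L + 1 \<and>
                                        (\<forall>i<L + 1. path_matching (\<alpha> ! i) (Ms ! i)) \<and>
                                        length \<gamma>s = k \<and>
                                        (\<forall>\<gamma> \<in> set \<gamma>s. full_height_walk m \<gamma>) \<and>
                                        sum_list (map card Ms) + sum_list (map (excess m) \<gamma>s) = r}.
                 (-1) ^ sum_list (map card Ms))"
proof -
  define \<mu>1 where "\<mu>1 = \<mu> div m"
  define \<mu>0 where "\<mu>0 = \<mu> mod m"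
  define t where "t = count_list \<xi> m"
  define k where "k = \<mu>1 + 1 - t"
  define \<alpha> where "\<alpha> = (m - \<mu>0 - 1) # filter (\<lambda>x. x < m) \<xi>"
  define L where "L = length \<alpha> - 1"
  define F :: "rat fps" where "F = fps_of_poly (pp (m - \<mu>0 - 1) * prod_list (map pp \<xi>))
              * inverse (fps_of_poly (pp m)) ^ (\<mu>1 + 1)"
  have m: "m \<ge> 1" using assms(1) .
  have tk: "\<mu>1 + 1 = t + k" using assms(4) by (simp add: \<mu>1_def t_def k_def)
  have len\<alpha>: "length \<alpha> = L + 1" by (simp add: L_def \<alpha>_def)
  define I where "I = inverse (PP m)"
  have F_eq: "F = prod_list (map PP \<alpha>) * I ^ k"
  proof -
    have \<xi>le: "\<forall>x\<in>set \<xi>. x \<le> m" using assms(3) by auto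
    have split: "prod_list (map PP \<xi>) = PP m ^ t * prod_list (map PP (filter (\<lambda>x. x < m) \<xi>))"
      unfolding t_def by (rule prod_list_split[OF \<xi>le])
    have fp: "fps_of_poly (prod_list (map pp \<xi>)) = prod_list (map PP \<xi>)"
      by (simp add: fps_of_poly_prod_list o_def)
    have inv1: "PP m * I = 1" unfolding I_def by (rule PP_inv)
    have "F = PP (m - \<mu>0 - 1) * (PP m ^ t * prod_list (map PP (filter (\<lambda>x. x < m) \<xi>))) * I ^ (t + k)"
      unfolding F_def I_def using fp split tk by (simp add: fps_of_poly_mult)
    also have "\<dots> = PP (m - \<mu>0 - 1) * prod_list (map PP (filter (\<lambda>x. x < m) \<xi>)) * (PP m * I) ^ t * I ^ k"
      by (simp add: power_add power_mult_distrib algebra_simps)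
    also have "\<dots> = prod_list (map PP \<alpha>) * I ^ k" using inv1 by (simp add: \<alpha>_def)
    finally show ?thesis .
  qed
  define g where "g = (\<lambda>js. (-1::rat) ^ sum_list js * (\<Prod>l<L + 1. of_nat ((\<alpha> ! l - js ! l) choose (js ! l))))"
  define h where "h = (\<lambda>us. \<Prod>\<nu><k. (of_nat (Bm m (us ! \<nu>)) :: rat))"
  have A_nth: "prod_list (map PP \<alpha>) $ i = (\<Sum>js\<in>LS (L + 1) i. g js)" for i
  proof -
    have "prod_list (map PP \<alpha>) $ i = (\<Sum>js\<in>LS (L + 1) i. \<Prod>l<L + 1. map PP \<alpha> ! l $ (js ! l))"
      using prod_list_fps_nth[of "map PP \<alpha>" i] len\<alpha> by simp
    also have "\<dots> = (\<Sum>js\<in>LS (L + 1) i. g js)"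
    proof (rule sum.cong[OF refl])
      fix js assume js: "js \<in> LS (L + 1) i"
      then have lj: "length js = L + 1" by (simp add: LS_def)
      have "(\<Prod>l<L + 1. map PP \<alpha> ! l $ (js ! l)) = (\<Prod>l<L + 1. (-1::rat) ^ (js ! l) * of_nat ((\<alpha> ! l - js ! l) choose (js ! l)))"
        using len\<alpha> by (intro prod.cong) (simp_all add: coeff_pp)
      also have "\<dots> = (\<Prod>l<L + 1. (-1::rat) ^ (js ! l)) * (\<Prod>l<L + 1. of_nat ((\<alpha> ! l - js ! l) choose (js ! l)))"
        by (rule prod.distrib)
      also have "(\<Prod>l<L + 1. (-1::rat) ^ (js ! l)) = (-1) ^ sum_list js"
      proof -
        have "sum_list js = (\<Sum>l<L + 1. js ! l)"
          using lj by (simp only: sum_list_sum_nth atLeast0LessThan)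
        then show ?thesis by (simp only: power_sum)
      qed
      finally show "(\<Prod>l<L + 1. map PP \<alpha> ! l $ (js ! l)) = g js" by (simp add: g_def)
    qed
    finally show ?thesis .
  qed
  have B_nth: "(I ^ k) $ i = (\<Sum>us\<in>LS k i. h us)" for i
  proof -
    have "(I ^ k) $ i = prod_list (replicate k I) $ i" by simp
    also have "\<dots> = (\<Sum>us\<in>LS k i. \<Prod>l<k. replicate k I ! l $ (us ! l))"
      using prod_list_fps_nth[of "replicate k I" i] by simp
    also have "\<dots> = (\<Sum>us\<in>LS k i. h us)"
      by (intro sum.cong refl) (simp add: h_def I_def inv_PP_nth[OF m])
    finally show ?thesis .
  qed
  have Fr: "F $ r = (\<Sum>(js, us) \<in> {(js, us). length js = L + 1 \<and> length us = k \<and>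
                              sum_list js + sum_list us = r}. g js * h us)"
    unfolding F_eq by (rule fps_mult_nth_pairs[OF A_nth B_nth])
  have eq1: "F $ r = of_int (\<Sum>(js, us) \<in> {(js, us). length js = L + 1 \<and> length us = k \<and>
                                        sum_list js + sum_list us = r}.
                 (-1) ^ sum_list js
                 * (\<Prod>i<L + 1. int ((\<alpha> ! i - js ! i) choose (js ! i)))
                 * (\<Prod>\<nu><k. int (Bm m (us ! \<nu>))))"
    unfolding Fr by (simp add: g_def h_def split_def)
  have eq2: "(\<Sum>(js, us) \<in> {(js, us). length js = L + 1 \<and> length us = k \<and>
                                        sum_list js + sum_list us = r}.
                 (-1) ^ sum_list js
                 * (\<Prod>i<L + 1. int ((\<alpha> ! i - js ! i) choose (js ! i)))
                 * (\<Prod>\<nu><k. int (Bm m (us ! \<nu>))))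
       = (\<Sum>(Ms, \<gamma>s) \<in> {(Ms, \<gamma>s). length Ms = L + 1 \<and>
                                        (\<forall>i<L + 1. path_matching (\<alpha> ! i) (Ms ! i)) \<and>
                                        length \<gamma>s = k \<and>
                                        (\<forall>\<gamma> \<in> set \<gamma>s. full_height_walk m \<gamma>) \<and>
                                        sum_list (map card Ms) + sum_list (map (excess m) \<gamma>s) = r}.
                 (-1::int) ^ sum_list (map card Ms))"
    using second_sum[OF m, of \<alpha> "L + 1" k r] by (simp add: TT_def SS_def)
  note eq3 = eq1[unfolded eq2]
  show ?thesis
    unfolding Let_def
    using eq1 eq3
    unfolding F_def \<mu>1_def \<mu>0_def t_def k_def \<alpha>_def L_def
    by (intro conjI)
qed

end
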